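(* For $k\ge1$ and real $x$ let $F_k(x)=\sum_{\nu=1}^k \frac{\sin(\nu x)}{\nu}$, and for $x\in(0,\pi)$ let $H(x)=\sum_{k=1}^\infty F_k(x)(\cos(x))^k$. Then for every $x\in(0,\pi)$, $$H(x)=\frac{\pi/2-x}{1-\cos(x)}.$$ In particular, $H$ is completely monotonic on $(0,\pi/2]$.
   Context: A function $f:I\to\mathbb{R}$ on an interval $I\subset\mathbb{R}$ is completely monotonic if it has derivatives of all orders and $(-1)^n f^{(n)}(x)\ge 0$ for all $n=0,1,2,\dots$ and $x\in I$. *)

theory Defs
  imports "HOL-Analysis.Analysis"
begin

definition completely_monotonic_on :: "real set \<Rightarrow> (real \<Rightarrow> real) \<Rightarrow> bool" where
  "completely_monotonic_on I f \<longleftrightarrow>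
     (\<exists>D :: nat \<Rightarrow> real \<Rightarrow> real.
        (\<forall>x\<in>I. D 0 x = f x) \<and>
        (\<forall>n. \<forall>x\<in>I. (D n has_real_derivative D (Suc n) x) (at x within I)) \<and>
        (\<forall>n. \<forall>x\<in>I. (-1) ^ n * D n x \<ge> 0))"

definition F :: "nat \<Rightarrow> real \<Rightarrow> real" where
  "F k x = (\<Sum>\<nu>=1..k. sin (real \<nu> * x) / real \<nu>)"

definition H :: "real \<Rightarrow> real" where
  "H x = (\<Sum>k. F (Suc k) x * (cos x) ^ (Suc k))"

end

theory Submission
  imports Defs
begin


lemma im_series:
  fixes x :: real
  assumes x: "0 < x" "x < pi"
  shows "(\<lambda>n. cos x ^ n * sin (real n * x) / real n) sums (pi/2 - x)"
proof -
  define c where "c = cos x"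
  define s where "s = sin x"
  have s: "s > 0" using x by (simp add: s_def sin_gt_zero)
  have c1: "\<bar>c\<bar> < 1"
  proof -
    have "c^2 + s^2 = 1" by (simp add: c_def s_def)
    hence "c^2 < 1" using s by (smt (verit) zero_less_power)
    thus ?thesis by (simp add: abs_square_less_1)
  qed
  define w where "w = complex_of_real c * cis x"
  have nw: "cmod w < 1" using c1 by (simp add: w_def norm_mult)
  have "(\<lambda>n. - ((-(-w))^n) / of_nat n) sums Ln (1 + (-w))"
    by (rule Ln_series') (use nw in simp)
  hence "(\<lambda>n. - (w^n / of_nat n)) sums Ln (1 - w)" by simp
  hence "(\<lambda>n. w^n / of_nat n) sums (- Ln (1 - w))"
    using sums_minus by fastforce
  hence A: "(\<lambda>n. Im (w^n / of_nat n)) sums Im (- Ln (1 - w))" by (rule sums_Im)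
  have e: "1 - w = exp (complex_of_real (ln s) + \<i> * complex_of_real (x - pi/2))"
  proof -
    have "exp (complex_of_real (ln s) + \<i> * complex_of_real (x - pi/2))
        = complex_of_real s * cis (x - pi/2)"
      using s by (simp add: exp_add cis_conv_exp exp_of_real)
    also have "\<dots> = 1 - w"
      by (simp add: complex_eq_iff w_def c_def s_def cos_diff sin_diff power2_eq_square
          sin_squared_eq algebra_simps)
    finally show ?thesis by simp
  qed
  have L: "Ln (1 - w) = complex_of_real (ln s) + \<i> * complex_of_real (x - pi/2)"
    unfolding e using x by (intro Ln_exp) auto
  have B: "Im (w^n / of_nat n) = c ^ n * sin (real n * x) / real n" for n
  proof -
    have "w^n = complex_of_real (c^n) * cis (real n * x)"
      by (simp add: w_def power_mult_distrib Complex.DeMoivre)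
    thus ?thesis by (simp add: Im_divide_of_nat)
  qed
  show ?thesis using A unfolding B L c_def by simp
qed

lemma F_bound: "\<bar>F k x\<bar> \<le> real k"
proof -
  have "\<bar>F k x\<bar> \<le> (\<Sum>\<nu>=1..k. \<bar>sin (real \<nu> * x) / real \<nu>\<bar>)"
    unfolding F_def by (rule sum_abs)
  also have "\<dots> \<le> (\<Sum>\<nu>=1..k. 1)"
  proof (rule sum_mono)
    fix \<nu> assume "\<nu> \<in> {1..k}"
    hence r: "real \<nu> \<ge> 1" by simp
    have "\<bar>sin (real \<nu> * x)\<bar> \<le> 1" by (rule abs_sin_le_one)
    hence "\<bar>sin (real \<nu> * x)\<bar> \<le> real \<nu>" using r by linarith
    thus "\<bar>sin (real \<nu> * x) / real \<nu>\<bar> \<le> 1"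
      using r by (simp only: abs_divide abs_of_nat) (simp add: divide_le_eq)
  qed
  also have "\<dots> = real k" by simp
  finally show ?thesis .
qed

lemma F_Suc: "F (Suc k) x = F k x + sin (real (Suc k) * x) / real (Suc k)"
  unfolding F_def by simp

lemma partial:
  assumes "c \<noteq> 1"
  shows "(\<Sum>k<N. F (Suc k) x * c ^ Suc k)
     = ((\<Sum>n<Suc N. c ^ n * sin (real n * x) / real n) - c ^ Suc N * F N x) / (1 - c)"
proof (induction N)
  case 0
  then show ?case by (simp add: F_def)
next
  case (Suc N)
  have d: "1 - c \<noteq> 0" using assms by simp
  have alg: "(A - Q*f)/(1-c) + (f+q)*Q = ((A + Q*q) - (c*Q)*(f+q))/(1-c)"
    for A Q f q :: real using d by (simp add: field_simps)
  let ?b = "\<lambda>n. c ^ n * sin (real n * x) / real n"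
  let ?A = "\<Sum>n<Suc N. ?b n"
  let ?Q = "c ^ Suc N"
  let ?f = "F N x"
  let ?q = "sin (real (Suc N) * x) / real (Suc N)"
  have 1: "(\<Sum>n<Suc (Suc N). ?b n) = ?A + ?Q * ?q" by simp
  have 2: "c ^ Suc (Suc N) * F (Suc N) x = (c * ?Q) * (?f + ?q)" by (simp add: F_Suc)
  have 3: "(\<Sum>k<Suc N. F (Suc k) x * c ^ Suc k) = (?A - ?Q * ?f)/(1-c) + (?f + ?q) * ?Q"
    unfolding sum.lessThan_Suc[of _ N] Suc F_Suc[of N x] by simp
  show ?case unfolding 1 2 3 alg ..
qed

lemma part1:
  fixes x :: real
  assumes x: "0 < x" "x < pi"
  shows "(\<lambda>k. F (Suc k) x * (cos x) ^ (Suc k)) sums ((pi / 2 - x) / (1 - cos x))"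
proof -
  define c where "c = cos x"
  have s: "sin x > 0" using x by (simp add: sin_gt_zero)
  have c1: "\<bar>c\<bar> < 1"
  proof -
    have "c^2 + (sin x)^2 = 1" by (simp add: c_def)
    hence "c^2 < 1" using s by (smt (verit) zero_less_power)
    thus ?thesis by (simp add: abs_square_less_1)
  qed
  hence cn1: "c \<noteq> 1" by auto
  have T: "(\<lambda>N. \<Sum>n<Suc N. c ^ n * sin (real n * x) / real n) \<longlonglongrightarrow> pi/2 - x"
    using im_series[OF x] unfolding sums_def c_def by (rule LIMSEQ_Suc)
  have Z: "(\<lambda>N. c ^ Suc N * F N x) \<longlonglongrightarrow> 0"
  proof (rule Lim_null_comparison)
    have "(\<lambda>n. of_nat n * \<bar>c\<bar> ^ n) \<longlonglongrightarrow> 0"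
      by (rule powser_times_n_limit_0) (use c1 in simp)
    thus "(\<lambda>N. real N * \<bar>c\<bar> ^ N) \<longlonglongrightarrow> 0" by simp
    show "\<forall>\<^sub>F N in sequentially. norm (c ^ Suc N * F N x) \<le> real N * \<bar>c\<bar> ^ N"
    proof (rule always_eventually, rule allI)
      fix N
      have "norm (c ^ Suc N * F N x) = \<bar>c\<bar> * \<bar>c\<bar>^N * \<bar>F N x\<bar>"
        by (simp add: abs_mult power_abs)
      also have "\<dots> \<le> 1 * \<bar>c\<bar>^N * real N"
        using c1 F_bound[of N x] by (intro mult_mono) auto
      finally show "norm (c ^ Suc N * F N x) \<le> real N * \<bar>c\<bar> ^ N" by (simp only: mult.commute)
    qed
  qed
  have "(\<lambda>N. ((\<Sum>n<Suc N. c ^ n * sin (real n * x) / real n) - c ^ Suc N * F N x) / (1 - c))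
      \<longlonglongrightarrow> ((pi/2 - x) - 0) / (1 - c)"
    using cn1 by (intro tendsto_intros T Z) simp
  hence "(\<lambda>N. \<Sum>k<N. F (Suc k) x * c ^ Suc k) \<longlonglongrightarrow> (pi/2 - x) / (1 - c)"
    unfolding partial[OF cn1] by simp
  thus ?thesis unfolding sums_def c_def .
qed



datatype ex = Cn real | Vr | Tn | Sc | Ad ex ex | Ml ex ex

fun ev :: "ex \<Rightarrow> real \<Rightarrow> real" where
  "ev (Cn a) t = a"
| "ev Vr t = t"
| "ev Tn t = tan t"
| "ev Sc t = inverse (cos t)"
| "ev (Ad a b) t = ev a t + ev b t"
| "ev (Ml a b) t = ev a t * ev b t"

fun dx :: "ex \<Rightarrow> ex" where
  "dx (Cn a) = Cn 0"
| "dx Vr = Cn 1"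
| "dx Tn = Ad (Cn 1) (Ml Tn Tn)"
| "dx Sc = Ml Sc Tn"
| "dx (Ad a b) = Ad (dx a) (dx b)"
| "dx (Ml a b) = Ad (Ml (dx a) b) (Ml a (dx b))"

fun nn :: "ex \<Rightarrow> bool" where
  "nn (Cn a) = (a \<ge> 0)"
| "nn (Ad a b) = (nn a \<and> nn b)"
| "nn (Ml a b) = (nn a \<and> nn b)"
| "nn _ = True"

lemma nn_dx: "nn e \<Longrightarrow> nn (dx e)"
  by (induction e) auto

lemma nn_dxn: "nn e \<Longrightarrow> nn ((dx ^^ n) e)"
  by (induction n) (auto simp: nn_dx)

lemma ev_nonneg: "nn e \<Longrightarrow> 0 \<le> t \<Longrightarrow> t < pi/2 \<Longrightarrow> 0 \<le> ev e t"
proof (induction e)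
  case Tn
  then show ?case using tan_gt_zero[of t] by (cases "t = 0") auto
next
  case Sc
  have "cos t > 0" using Sc by (intro cos_gt_zero_pi) auto
  then show ?case by simp
qed auto

lemma ev_Cn: "ev (Cn a) = (\<lambda>_. a)" by (rule ext) simp
lemma ev_Vr: "ev Vr = (\<lambda>t. t)" by (rule ext) simp

lemma ev_deriv: "cos t \<noteq> 0 \<Longrightarrow> (ev e has_real_derivative ev (dx e) t) (at t)"
proof (induction e)
  case Tn
  have "inverse ((cos t)^2) = 1 + tan t * tan t"
    using Tn by (simp add: tan_def field_simps power2_eq_square)
  then show ?case using DERIV_tan[OF Tn] by (simp add: fun_eq_iff)
next
  case Sc
  have "((\<lambda>t. inverse (cos t)) has_real_derivative - (inverse (cos t) * (- sin t) * inverse (cos t))) (at t)"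
    using Sc by (intro DERIV_inverse' DERIV_cos) auto
  moreover have "- (inverse (cos t) * (- sin t) * inverse (cos t)) = inverse (cos t) * tan t"
    using Sc by (simp add: tan_def field_simps power2_eq_square)
  ultimately have "((\<lambda>t. inverse (cos t)) has_real_derivative inverse (cos t) * tan t) (at t)"
    by metis
  thus ?case by simp
next
  case (Ad a b)
  then show ?case by (auto intro!: derivative_eq_intros)
next
  case (Ml a b)
  then show ?case by (auto intro!: derivative_eq_intros simp: fun_eq_iff)
qed (auto simp: ev_Cn ev_Vr intro!: derivative_eq_intros)


lemma H_eq: "0 < x \<Longrightarrow> x < pi \<Longrightarrow> H x = (pi / 2 - x) / (1 - cos x)"
  unfolding H_def using part1 sums_unique by metis

definition e0 :: ex where "e0 = Ml Vr (Ad (Ml Sc Sc) (Ml Sc Tn))"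

lemma e0_nn: "nn e0" by (simp add: e0_def)

lemma e0_eval:
  assumes "0 < x" "x < pi"
  shows "ev e0 (pi/2 - x) = (pi / 2 - x) / (1 - cos x)"
proof -
  have s: "sin x > 0" using assms by (simp add: sin_gt_zero)
  have c: "1 - cos x > 0"
  proof -
    have "cos x \<noteq> 1"
    proof
      assume "cos x = 1"
      hence "sin x ^ 2 = 0" using sin_cos_squared_add[of x] by simp
      thus False using s by simp
    qed
    thus ?thesis using cos_le_one[of x] by linarith
  qed
  have ss: "sin x * sin x = (1 - cos x) * (1 + cos x)"
    using sin_cos_squared_add[of x] by (simp add: algebra_simps power2_eq_square)
  have c2: "1 + cos x > 0"
  proof -
    have "(1 - cos x) * (1 + cos x) > 0" using s unfolding ss[symmetric] by simp
    thus ?thesis using c by (simp add: zero_less_mult_iff)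
  qed
  have ct: "cos (pi/2 - x) = sin x" by (simp add: cos_diff)
  have st: "sin (pi/2 - x) = cos x" by (simp add: sin_diff)
  have "ev e0 (pi/2 - x) = (pi/2 - x) * (inverse (sin x) * inverse (sin x) + inverse (sin x) * (cos x / sin x))"
    by (simp only: e0_def ev.simps tan_def ct st)
  also have "\<dots> = (pi/2 - x) * ((1 + cos x) / (sin x * sin x))"
    using s by (simp add: field_simps)
  also have "\<dots> = (pi/2 - x) * ((1 + cos x) / ((1 - cos x) * (1 + cos x)))"
    by (simp only: ss)
  also have "\<dots> = (pi / 2 - x) / (1 - cos x)"
  proof -
    have "(1 + cos x) / ((1 - cos x) * (1 + cos x)) = 1 / (1 - cos x)"
      using c2 by (metis div_by_1 less_irrefl mult.commute nonzero_divide_mult_cancel_left)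
    thus ?thesis by simp
  qed
  finally show ?thesis .
qed

theorem corollary2:
  shows "(\<forall>x\<in>{0<..<pi}. summable (\<lambda>k. F (Suc k) x * (cos x) ^ (Suc k)) \<and>
            H x = (pi / 2 - x) / (1 - cos x))
         \<and> completely_monotonic_on {0<..pi / 2} H"
proof
  show "\<forall>x\<in>{0<..<pi}. summable (\<lambda>k. F (Suc k) x * (cos x) ^ (Suc k)) \<and>
            H x = (pi / 2 - x) / (1 - cos x)"
  proof
    fix x :: real assume "x \<in> {0<..<pi}"
    hence x: "0 < x" "x < pi" by auto
    show "summable (\<lambda>k. F (Suc k) x * (cos x) ^ (Suc k)) \<and> H x = (pi / 2 - x) / (1 - cos x)"
      using sums_summable[OF part1[OF x]] H_eq[OF x] by blast
  qed
  define D where "D n x = (-1)^n * ev ((dx ^^ n) e0) (pi/2 - x)" for n x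
  show "completely_monotonic_on {0<..pi / 2} H"
    unfolding completely_monotonic_on_def
  proof (intro exI[of _ D] conjI ballI allI)
    fix x assume x: "x \<in> {0<..pi/2}"
    hence x': "0 < x" "x < pi" by auto
    show "D 0 x = H x" unfolding D_def using e0_eval[OF x'] H_eq[OF x'] by simp
  next
    fix n x assume x: "x \<in> {0<..pi/2}"
    have "0 \<le> ev ((dx ^^ n) e0) (pi/2 - x)"
      using x by (intro ev_nonneg nn_dxn e0_nn) auto
    thus "(-1) ^ n * D n x \<ge> 0" unfolding D_def by (simp flip: power_mult_distrib)
  next
    fix n x assume x: "x \<in> {0<..pi/2}"
    hence "x < pi" using pi_gt_zero by auto
    hence "sin x > 0" using x by (intro sin_gt_zero) auto
    hence "cos (pi/2 - x) \<noteq> 0" by (simp add: cos_diff)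
    hence d1: "(ev ((dx ^^ n) e0) has_real_derivative ev ((dx ^^ Suc n) e0) (pi/2 - x)) (at (pi/2 - x))"
      using ev_deriv by simp
    have "((\<lambda>x. ev ((dx ^^ n) e0) (pi/2 - x)) has_real_derivative
            ev ((dx ^^ Suc n) e0) (pi/2 - x) * (-1)) (at x)"
      by (rule DERIV_chain2[where g="\<lambda>x. pi/2 - x" and x=x, OF d1]) (auto intro!: derivative_eq_intros)
    hence "(D n has_real_derivative (-1)^n * (ev ((dx ^^ Suc n) e0) (pi/2 - x) * (-1))) (at x)"
      unfolding D_def[abs_def] by (intro DERIV_cmult)
    hence "(D n has_real_derivative D (Suc n) x) (at x)"
      unfolding D_def by simp
    thus "(D n has_real_derivative D (Suc n) x) (at x within {0<..pi/2})"
      by (rule has_field_derivative_at_within)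
  qed
qed

end
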